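(* Let $X$ be a topological space. If $1\in\mathrm{MG}(X)$, then $X$ is metrizable (i.e. $\mathrm{Met}(X;\mathbb{R})\ne\emptyset$).
   Context: A linearly ordered Abelian group is an Abelian group with a linear order compatible with addition. For $x,y\in G_{>0}$, $x\asymp y$ iff $y\le nx$ and $x\le my$ for some $n,m\in\mathbb{Z}_{\ge1}$; $\mathrm{Arc}(G)=G_{>0}/\asymp$ (linearly ordered by $[x]\preceq[y]$ iff ($nx<y$ for all $n$) or $x\asymp y$), and $\mathrm{Arc}(G)^\perp$ is $\mathrm{Arc}(G)$ with a new least element adjoined. For a bottomed linearly ordered set $S$ with least element $\perp_S$, $S^*=S\setminus\{\perp_S\}$, the character $\chi(S)$ is the least cardinal $\kappa>0$ such that some strictly decreasing family $(s_\alpha)_{\alpha<\kappa}$ in $S^*$ has every $t\in S^*$ bounded below by some $s_\alpha$. A $G$-metric on $X$ is $d\colon X^2\to G$ with $d(x,y)=0\iff x=y$, $d\ge0$, symmetric, triangle inequality, topology via open balls of radii in $G_{>0}$; $\mathrm{Met}(X;G)$ is the set of $G$-metrics generating the topology of $X$. A cardinal $\kappa$ is in $\mathrm{MG}(X)$ iff some linearly ordered Abelian group $G$ with $\chi(\mathrm{Arc}(G)^\perp)=\kappa$ has $\mathrm{Met}(X;G)\ne\emptyset$. *)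

theory Defs
  imports "HOL-Analysis.Analysis"
begin

definition nsmul :: "nat \<Rightarrow> 'g::linordered_ab_group_add \<Rightarrow> 'g" where
  "nsmul n x = (\<Sum>i<n. x)"

definition arch_eq :: "'g::linordered_ab_group_add \<Rightarrow> 'g \<Rightarrow> bool" where
  "arch_eq x y \<longleftrightarrow> 0 < x \<and> 0 < y \<and>
     (\<exists>n::nat. n \<ge> 1 \<and> y \<le> nsmul n x) \<and> (\<exists>m::nat. m \<ge> 1 \<and> x \<le> nsmul m y)"

definition Arc :: "'g::linordered_ab_group_add set set" where
  "Arc = {{y. arch_eq x y} | x. 0 < x}"

definition arc_le :: "'g::linordered_ab_group_add set \<Rightarrow> 'g set \<Rightarrow> bool" where
  "arc_le A B \<longleftrightarrow> (\<exists>x\<in>A. \<exists>y\<in>B. (\<forall>n. nsmul n x < y) \<or> arch_eq x y)"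

definition Arc_bot :: "'g::linordered_ab_group_add set option set" where
  "Arc_bot = insert None (Some ` Arc)"

fun arc_bot_le :: "'g::linordered_ab_group_add set option \<Rightarrow> 'g set option \<Rightarrow> bool" where
  "arc_bot_le None _ = True"
| "arc_bot_le (Some A) None = False"
| "arc_bot_le (Some A) (Some B) = arc_le A B"

definition char_family ::
  "'a set \<Rightarrow> ('a \<Rightarrow> 'a \<Rightarrow> bool) \<Rightarrow> 'a \<Rightarrow> 'i rel \<Rightarrow> ('i \<Rightarrow> 'a) \<Rightarrow> bool" where
  "char_family S le b0 r s \<longleftrightarrow>
     well_order_on (Field r) r \<and>
     (\<forall>\<alpha>\<in>Field r. s \<alpha> \<in> S - {b0}) \<and>
     (\<forall>\<alpha>\<in>Field r. \<forall>\<beta>\<in>Field r. (\<alpha>, \<beta>) \<in> r \<and> \<alpha> \<noteq> \<beta> \<longrightarrow> le (s \<beta>) (s \<alpha>) \<and> s \<beta> \<noteq> s \<alpha>) \<and>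
     (\<forall>t\<in>S - {b0}. \<exists>\<alpha>\<in>Field r. le (s \<alpha>) t)"

text \<open>chi(S) = 1: since 1 is the least positive cardinal, this holds iff such a family
  indexed by a one-element well-order exists.\<close>
definition character_one :: "'a set \<Rightarrow> ('a \<Rightarrow> 'a \<Rightarrow> bool) \<Rightarrow> 'a \<Rightarrow> bool" where
  "character_one S le b0 \<longleftrightarrow>
     (\<exists>(r::unit rel) s. Field r \<noteq> {} \<and> char_family S le b0 r s)"

definition is_G_metric :: "'a set \<Rightarrow> ('a \<Rightarrow> 'a \<Rightarrow> 'g::linordered_ab_group_add) \<Rightarrow> bool" where
  "is_G_metric M d \<longleftrightarrow>
     (\<forall>x\<in>M. \<forall>y\<in>M. 0 \<le> d x y \<and> (d x y = 0 \<longleftrightarrow> x = y) \<and> d x y = d y x) \<and>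
     (\<forall>x\<in>M. \<forall>y\<in>M. \<forall>z\<in>M. d x z \<le> d x y + d y z)"

definition G_ball :: "'a set \<Rightarrow> ('a \<Rightarrow> 'a \<Rightarrow> 'g::linordered_ab_group_add) \<Rightarrow> 'a \<Rightarrow> 'g \<Rightarrow> 'a set" where
  "G_ball M d x \<epsilon> = {y\<in>M. d x y < \<epsilon>}"

definition in_Met :: "'a topology \<Rightarrow> ('a \<Rightarrow> 'a \<Rightarrow> 'g::linordered_ab_group_add) \<Rightarrow> bool" where
  "in_Met X d \<longleftrightarrow> is_G_metric (topspace X) d \<and>
     (\<forall>U. openin X U \<longleftrightarrow>
        U \<subseteq> topspace X \<and> (\<forall>x\<in>U. \<exists>\<epsilon>>0. G_ball (topspace X) d x \<epsilon> \<subseteq> U))"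

end

theory Submission
  imports Defs
begin

lemma nsmul_0[simp]: "nsmul 0 x = 0" by (simp add: nsmul_def)
lemma nsmul_Suc: "nsmul (Suc n) x = x + nsmul n x"
  by (simp add: nsmul_def)
lemma nsmul_1[simp]: "nsmul 1 x = x" by (simp add: nsmul_def)
lemma nsmul_Suc0[simp]: "nsmul (Suc 0) x = x" by (simp add: nsmul_def)
lemma nsmul_zero[simp]: "nsmul n (0::'g::linordered_ab_group_add) = 0" by (simp add: nsmul_def)

lemma nsmul_add_n: "nsmul (m + n) x = nsmul m x + nsmul n x"
  by (induction m) (simp_all add: nsmul_Suc add.assoc)

lemma nsmul_add_x: "nsmul n (x + y) = nsmul n x + nsmul n (y::'g::linordered_ab_group_add)"
  by (simp add: nsmul_def sum.distrib)

lemma nsmul_mult: "nsmul (m * n) x = nsmul m (nsmul n (x::'g::linordered_ab_group_add))"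
  by (induction m) (simp_all add: nsmul_Suc nsmul_add_n)

lemma nsmul_mono: "x \<le> y \<Longrightarrow> nsmul n x \<le> nsmul n (y::'g::linordered_ab_group_add)"
  by (simp add: nsmul_def sum_mono)

lemma nsmul_strict_mono: "x < y \<Longrightarrow> n \<ge> 1 \<Longrightarrow> nsmul n x < nsmul n (y::'g::linordered_ab_group_add)"
  unfolding nsmul_def by (rule sum_strict_mono) (auto simp: lessThan_empty_iff)

lemma nsmul_cancel_le: "nsmul n x \<le> nsmul n y \<Longrightarrow> n \<ge> 1 \<Longrightarrow> x \<le> (y::'g::linordered_ab_group_add)"
  using nsmul_strict_mono[of y x n] by (meson not_le)

lemma nsmul_cancel_less: "nsmul n x < nsmul n y \<Longrightarrow> x < (y::'g::linordered_ab_group_add)"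
  using nsmul_mono[of y x n] by (meson not_le)

lemma nsmul_nonneg: "0 \<le> x \<Longrightarrow> 0 \<le> nsmul n (x::'g::linordered_ab_group_add)"
  using nsmul_mono[of 0 x n] by simp

lemma nsmul_mono_n: "0 \<le> x \<Longrightarrow> m \<le> n \<Longrightarrow> nsmul m x \<le> nsmul n (x::'g::linordered_ab_group_add)"
proof -
  assume a: "0 \<le> x" "m \<le> n"
  then obtain k where "n = m + k" using le_Suc_ex by blast
  then show ?thesis using nsmul_nonneg[OF a(1), of k] by (simp add: nsmul_add_n)
qed

lemma nsmul_strict_mono_n: "0 < x \<Longrightarrow> m < n \<Longrightarrow> nsmul m x < nsmul n (x::'g::linordered_ab_group_add)"
proof -
  assume a: "0 < x" "m < n"
  then obtain k where "n = Suc m + k" using less_imp_Suc_add by blast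
  then show ?thesis using nsmul_nonneg[of x k] a(1)
    by (simp add: nsmul_add_n nsmul_Suc add.assoc add_pos_nonneg)
qed

lemma least_class:
  assumes "character_one (Arc_bot :: 'g::linordered_ab_group_add set option set) arc_bot_le None"
  shows "\<exists>x0::'g. 0 < x0 \<and> (\<forall>y>0. \<exists>N\<ge>1. x0 \<le> nsmul N y)"
proof -
  obtain r :: "unit rel" and s :: "unit \<Rightarrow> 'g set option" where F: "Field r \<noteq> {}" and
    c: "\<forall>\<alpha>\<in>Field r. s \<alpha> \<in> Arc_bot - {None}"
       "\<forall>t\<in>(Arc_bot :: 'g set option set) - {None}. \<exists>\<alpha>\<in>Field r. arc_bot_le (s \<alpha>) t"
    using assms unfolding character_one_def char_family_def by (elim exE conjE) (rule that)
  have u: "() \<in> Field r" using F by auto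
  have "s () \<in> Arc_bot - {None}" using c(1) u by blast
  then obtain A where sA: "s () = Some A" and "A \<in> Arc" unfolding Arc_bot_def by auto
  then obtain x0 where x0: "0 < x0" and A: "A = {y. arch_eq x0 y}" unfolding Arc_def by auto
  have "\<exists>N\<ge>1. x0 \<le> nsmul N y" if y: "0 < y" for y
  proof -
    define B where "B = {z. arch_eq y z}"
    have "B \<in> Arc" unfolding Arc_def B_def using y by auto
    then have "Some B \<in> Arc_bot - {None}" unfolding Arc_bot_def by auto
    then obtain \<alpha> where "\<alpha> \<in> Field r" "arc_bot_le (s \<alpha>) (Some B)" using c(2) by blast
    then have "arc_le A B" using sA by (cases \<alpha>) simp
    then obtain x y' where xA: "arch_eq x0 x" and yB: "arch_eq y y'"
      and h: "(\<forall>n. nsmul n x < y') \<or> arch_eq x y'"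
      unfolding arc_le_def A B_def by auto
    obtain m where m: "m \<ge> 1" "x0 \<le> nsmul m x" using xA unfolding arch_eq_def by auto
    obtain n1 where n1: "n1 \<ge> 1" "y' \<le> nsmul n1 y" using yB unfolding arch_eq_def by auto
    obtain m2 where m2: "m2 \<ge> 1" "x \<le> nsmul m2 y'"
    proof (cases "\<forall>n. nsmul n x < y'")
      case True
      then have "x \<le> nsmul 1 y'" using nsmul_1 less_imp_le by metis
      then show ?thesis using that by blast
    next
      case False
      then show ?thesis using h that unfolding arch_eq_def by blast
    qed
    have "x0 \<le> nsmul m x" by (rule m(2))
    also have "\<dots> \<le> nsmul m (nsmul m2 y')" by (rule nsmul_mono[OF m2(2)])
    also have "\<dots> \<le> nsmul m (nsmul m2 (nsmul n1 y))" by (rule nsmul_mono[OF nsmul_mono[OF n1(2)]])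
    also have "\<dots> = nsmul (m * m2 * n1) y" by (simp add: nsmul_mult)
    finally have "x0 \<le> nsmul (m * m2 * n1) y" .
    moreover have "0 < m * m2 * n1" using m(1) m2(1) n1(1) by simp
    ultimately show ?thesis by (metis Suc_leI One_nat_def)
  qed
  then show ?thesis using x0 by blast
qed

definition phiS :: "'g::linordered_ab_group_add \<Rightarrow> 'g \<Rightarrow> real set" where
  "phiS x0 g = {real p / real q | p q. q \<ge> 1 \<and> nsmul q g \<le> nsmul p x0} \<union> {1}"

definition phi :: "'g::linordered_ab_group_add \<Rightarrow> 'g \<Rightarrow> real" where
  "phi x0 g = Inf (phiS x0 g)"

lemma phiS_ne: "phiS x0 g \<noteq> {}" by (simp add: phiS_def)

lemma phiS_nonneg: "a \<in> phiS x0 g \<Longrightarrow> 0 \<le> a"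
  by (auto simp: phiS_def)

lemma phiS_bdd: "bdd_below (phiS x0 g)"
  using phiS_nonneg by (meson bdd_below.I)

lemma phi_nonneg: "0 \<le> phi x0 g"
  unfolding phi_def by (rule cInf_greatest[OF phiS_ne]) (rule phiS_nonneg)

lemma phi_le: "a \<in> phiS x0 g \<Longrightarrow> phi x0 g \<le> a"
  unfolding phi_def by (rule cInf_lower[OF _ phiS_bdd])

lemma phi_frac: "q \<ge> 1 \<Longrightarrow> nsmul q g \<le> nsmul p x0 \<Longrightarrow> phi x0 g \<le> real p / real q"
  by (rule phi_le) (auto simp: phiS_def)

lemma phi_zero: "phi x0 0 = 0"
proof -
  have "phi x0 0 \<le> real 0 / real 1" by (rule phi_frac) auto
  then show ?thesis using phi_nonneg[of x0 0] by simp
qed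

lemma phi_mono: "g \<le> h \<Longrightarrow> phi x0 g \<le> phi x0 h"
  unfolding phi_def
proof (rule cInf_superset_mono[OF phiS_ne phiS_bdd])
  assume "g \<le> h"
  then show "phiS x0 h \<subseteq> phiS x0 g"
    unfolding phiS_def using nsmul_mono order_trans by blast
qed

lemma phiS_add:
  assumes a: "a \<in> phiS x0 g" and b: "b \<in> phiS x0 h"
  shows "phi x0 (g + h) \<le> a + b"
proof (cases "a = 1 \<or> b = 1")
  case True
  have "phi x0 (g + h) \<le> 1" by (rule phi_le) (simp add: phiS_def)
  then show ?thesis using True phiS_nonneg[OF a] phiS_nonneg[OF b] by auto
next
  case False
  then obtain p1 q1 p2 q2 where a': "a = real p1 / real q1" "q1 \<ge> 1" "nsmul q1 g \<le> nsmul p1 x0"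
    and b': "b = real p2 / real q2" "q2 \<ge> 1" "nsmul q2 h \<le> nsmul p2 x0"
    using a b unfolding phiS_def by auto
  have "nsmul (q1 * q2) (g + h) = nsmul q2 (nsmul q1 g) + nsmul q1 (nsmul q2 h)"
    by (simp add: nsmul_add_x nsmul_mult[symmetric] mult.commute)
  also have "\<dots> \<le> nsmul q2 (nsmul p1 x0) + nsmul q1 (nsmul p2 x0)"
    by (intro add_mono nsmul_mono a'(3) b'(3))
  also have "\<dots> = nsmul (q2 * p1) x0 + nsmul (q1 * p2) x0"
    by (simp add: nsmul_mult)
  also have "\<dots> = nsmul (p1 * q2 + p2 * q1) x0"
    by (simp add: nsmul_add_n mult.commute)
  finally have "phi x0 (g + h) \<le> real (p1 * q2 + p2 * q1) / real (q1 * q2)"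
    using a'(2) b'(2) by (intro phi_frac) (auto simp: one_le_mult_iff)
  also have "\<dots> = a + b" using a'(1,2) b'(1,2) by (simp add: field_simps)
  finally show ?thesis .
qed

lemma phi_add: "phi x0 (g + h) \<le> phi x0 g + phi x0 h"
proof -
  have "phi x0 (g + h) - b \<le> phi x0 g" if b: "b \<in> phiS x0 h" for b
    unfolding phi_def[of x0 g]
    by (rule cInf_greatest[OF phiS_ne]) (use phiS_add[OF _ b] in force)
  then have "phi x0 (g + h) - phi x0 g \<le> phi x0 h"
    unfolding phi_def[of x0 h]
    by (intro cInf_greatest[OF phiS_ne]) (force simp: phi_def)
  then show ?thesis by simp
qed

lemma phi_pos:
  assumes g: "0 < g" and N: "N \<ge> 1" "x0 \<le> nsmul N g"
  shows "1 / real N \<le> phi x0 g"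
  unfolding phi_def
proof (rule cInf_greatest[OF phiS_ne])
  fix a assume "a \<in> phiS x0 g"
  then consider "a = 1" | p q where "a = real p / real q" "q \<ge> 1" "nsmul q g \<le> nsmul p x0"
    unfolding phiS_def by auto
  then show "1 / real N \<le> a"
  proof cases
    case 1 then show ?thesis using N by simp
  next
    case 2
    have "nsmul q g \<le> nsmul p (nsmul N g)" using 2(3) nsmul_mono[OF N(2)] order_trans by blast
    then have "nsmul q g \<le> nsmul (p * N) g" by (simp add: nsmul_mult)
    then have "q \<le> p * N" using nsmul_strict_mono_n[OF g, of "p * N" q] by (meson not_le)
    then have "real q \<le> real p * real N" by (metis of_nat_le_iff of_nat_mult)
    moreover have "real q > 0" "real N > 0" using 2(2) N(1) by auto
    ultimately have "1 / real N \<le> real p / real q" by (simp add: field_simps)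
    then show ?thesis using 2(1) by simp
  qed
qed

lemma phi_lt_imp:
  assumes eps: "0 < \<epsilon>" and N: "N \<ge> 1" "x0 \<le> nsmul N \<epsilon>" and g: "0 \<le> g"
    and lt: "phi x0 g < 1 / real N"
  shows "g < \<epsilon>"
proof -
  obtain a where a: "a \<in> phiS x0 g" "a < 1 / real N"
    using cInf_lessD[OF phiS_ne] lt unfolding phi_def by blast
  have "a \<noteq> 1" using a(2) N(1) by (auto simp: field_simps)
  then obtain p q where pq: "a = real p / real q" "q \<ge> 1" "nsmul q g \<le> nsmul p x0"
    using a(1) unfolding phiS_def by auto
  have "real p * real N < real q" using a(2) pq(1,2) N(1) by (simp add: field_simps)
  then have pNq: "p * N < q" by (metis of_nat_less_iff of_nat_mult)
  have "nsmul q g \<le> nsmul p (nsmul N \<epsilon>)" using pq(3) nsmul_mono[OF N(2)] order_trans by blast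
  also have "\<dots> = nsmul (p * N) \<epsilon>" by (simp add: nsmul_mult)
  also have "\<dots> < nsmul q \<epsilon>" by (rule nsmul_strict_mono_n[OF eps pNq])
  finally show ?thesis by (rule nsmul_cancel_less)
qed

lemma halving:
  fixes x0 :: "'g::linordered_ab_group_add"
  assumes nd: "\<not> (\<exists>m>0. \<forall>g>(0::'g). m \<le> g)" and x0: "0 < x0"
  shows "\<exists>f>0. nsmul (2 ^ k) f \<le> x0"
proof (induction k)
  case 0 have "nsmul (2 ^ 0) x0 \<le> x0" by simp
  then show ?case using x0 by blast
next
  case (Suc k)
  then obtain e where e: "0 < e" "nsmul (2 ^ k) e \<le> x0" by blast
  have "\<not> (\<forall>g>0. e \<le> g)" using nd e(1) by blast
  then obtain f' where f': "0 < f'" "f' < e" by (auto simp: not_le)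
  obtain f where f: "0 < f" "f + f \<le> e"
  proof (cases "f' + f' \<le> e")
    case True then show ?thesis using that f' by blast
  next
    case False
    then have "0 < e - f'" "(e - f') + (e - f') \<le> e" using f' by (auto simp: algebra_simps)
    then show ?thesis using that by blast
  qed
  have ff: "f + f = nsmul 2 f" by (simp add: numeral_2_eq_2 nsmul_Suc)
  have "nsmul (2 ^ Suc k) f = nsmul (2 ^ k * 2) f" by (simp add: mult.commute)
  also have "\<dots> = nsmul (2 ^ k) (f + f)" by (simp only: ff nsmul_mult)
  also have "\<dots> \<le> nsmul (2 ^ k) e" by (rule nsmul_mono[OF f(2)])
  finally show ?case using e(2) f(1) order_trans by blast
qed

theorem proposition2p45:
  fixes X :: "'a topology"
    and d :: "'a \<Rightarrow> 'a \<Rightarrow> 'g::linordered_ab_group_add"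
  assumes "character_one (Arc_bot :: 'g set option set) arc_bot_le None"
    and "in_Met X d"
  shows "metrizable_space X"
proof -
  obtain x0 :: 'g where x0: "0 < x0" and LC: "\<And>y. 0 < y \<Longrightarrow> \<exists>N\<ge>1. x0 \<le> nsmul N y"
    using least_class[OF assms(1)] by blast
  define M where "M = topspace X"
  have dm: "is_G_metric M d" and op: "\<And>U. openin X U \<longleftrightarrow>
        U \<subseteq> M \<and> (\<forall>x\<in>U. \<exists>\<epsilon>>0. G_ball M d x \<epsilon> \<subseteq> U)"
    using assms(2) unfolding in_Met_def M_def by auto
  define \<rho> where "\<rho> x y = (if x \<in> M \<and> y \<in> M then phi x0 (d x y) else 0)" for x y
  have MS: "Metric_space M \<rho>"
  proof
    fix x y show "0 \<le> \<rho> x y" by (simp add: \<rho>_def phi_nonneg)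
    show "\<rho> x y = \<rho> y x" using dm by (auto simp: \<rho>_def is_G_metric_def)
  next
    fix x y assume xy: "x \<in> M" "y \<in> M"
    show "\<rho> x y = 0 \<longleftrightarrow> x = y"
    proof
      assume "x = y"
      then have "d x y = 0" using dm xy unfolding is_G_metric_def by blast
      then show "\<rho> x y = 0" using xy by (simp add: \<rho>_def phi_zero)
    next
      assume r: "\<rho> x y = 0"
      show "x = y"
      proof (rule ccontr)
        assume "x \<noteq> y"
        then have "0 < d x y" using dm xy unfolding is_G_metric_def by (metis order_le_less)
        then obtain N where "N \<ge> 1" "x0 \<le> nsmul N (d x y)" using LC by blast
        then have "1 / real N \<le> phi x0 (d x y)" using phi_pos \<open>0 < d x y\<close> by blast
        moreover have "0 < 1 / real N" using \<open>N \<ge> 1\<close> by simp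
        ultimately show False using r xy by (simp add: \<rho>_def)
      qed
    qed
  next
    fix x y z assume xyz: "x \<in> M" "y \<in> M" "z \<in> M"
    have "phi x0 (d x z) \<le> phi x0 (d x y + d y z)"
      using dm xyz unfolding is_G_metric_def by (intro phi_mono) blast
    also have "\<dots> \<le> phi x0 (d x y) + phi x0 (d y z)" by (rule phi_add)
    finally show "\<rho> x z \<le> \<rho> x y + \<rho> y z" using xyz by (simp add: \<rho>_def)
  qed
  interpret m: Metric_space M \<rho> by (rule MS)
  have A: "\<exists>\<epsilon>>0. \<forall>g. 0 \<le> g \<and> g < \<epsilon> \<longrightarrow> phi x0 g < r" if r: "0 < r" for r
  proof (cases "\<exists>m>0. \<forall>g>(0::'g). m \<le> g")
    case True
    then obtain m :: 'g where m: "0 < m" "\<forall>g>0. m \<le> g" by blast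
    have "phi x0 g < r" if "0 \<le> g" "g < m" for g
    proof -
      have "g = 0" using that m(2) by (metis not_le order_le_less)
      then show ?thesis using r by (simp add: phi_zero)
    qed
    then show ?thesis using m(1) by blast
  next
    case False
    obtain k where k: "(1/2::real) ^ k < r" using real_arch_pow_inv[OF r, of "1/2"] by auto
    obtain f where f: "0 < f" "nsmul (2 ^ k) f \<le> x0" using halving[OF False x0] by blast
    have "phi x0 f \<le> real 1 / real (2 ^ k)" by (rule phi_frac) (use f in auto)
    then have pf: "phi x0 f < r" using k by (simp add: power_divide)
    have "phi x0 g < r" if "0 \<le> g" "g < f" for g
    proof -
      have "phi x0 g \<le> phi x0 f" by (rule phi_mono) (use that in simp)
      then show ?thesis using pf by linarith
    qed
    then show ?thesis using f(1) by blast
  qed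
  have B: "\<exists>r>0. \<forall>g. 0 \<le> g \<and> phi x0 g < r \<longrightarrow> g < \<epsilon>" if e: "0 < \<epsilon>" for \<epsilon>
  proof -
    obtain N where N: "N \<ge> 1" "x0 \<le> nsmul N \<epsilon>" using LC e by blast
    have "0 < 1 / real N" using N(1) by simp
    then show ?thesis using phi_lt_imp[OF e N] by blast
  qed
  have "openin X U \<longleftrightarrow> openin m.mtopology U" for U
  proof -
    have "(\<exists>\<epsilon>>0. G_ball M d x \<epsilon> \<subseteq> U) \<longleftrightarrow> (\<exists>r>0. m.mball x r \<subseteq> U)" if x: "x \<in> M" for x
    proof
      assume "\<exists>\<epsilon>>0. G_ball M d x \<epsilon> \<subseteq> U"
      then obtain \<epsilon> where e: "0 < \<epsilon>" "G_ball M d x \<epsilon> \<subseteq> U" by blast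
      obtain r where r: "0 < r" "\<forall>g. 0 \<le> g \<and> phi x0 g < r \<longrightarrow> g < \<epsilon>" using B[OF e(1)] by blast
      have "m.mball x r \<subseteq> G_ball M d x \<epsilon>"
      proof
        fix y assume "y \<in> m.mball x r"
        then have y: "y \<in> M" "phi x0 (d x y) < r" using x by (auto simp: \<rho>_def)
        have "0 \<le> d x y" using dm x y(1) unfolding is_G_metric_def by blast
        then show "y \<in> G_ball M d x \<epsilon>" using r(2) y by (auto simp: G_ball_def)
      qed
      then show "\<exists>r>0. m.mball x r \<subseteq> U" using r(1) e(2) by blast
    next
      assume "\<exists>r>0. m.mball x r \<subseteq> U"
      then obtain r where r: "0 < r" "m.mball x r \<subseteq> U" by blast
      obtain \<epsilon> where e: "0 < \<epsilon>" "\<forall>g. 0 \<le> g \<and> g < \<epsilon> \<longrightarrow> phi x0 g < r" using A[OF r(1)] by blast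
      have "G_ball M d x \<epsilon> \<subseteq> m.mball x r"
      proof
        fix y assume "y \<in> G_ball M d x \<epsilon>"
        then have y: "y \<in> M" "d x y < \<epsilon>" by (auto simp: G_ball_def)
        have "0 \<le> d x y" using dm x y(1) unfolding is_G_metric_def by blast
        then show "y \<in> m.mball x r" using e(2) y x by (auto simp: \<rho>_def)
      qed
      then show "\<exists>\<epsilon>>0. G_ball M d x \<epsilon> \<subseteq> U" using r(2) e(1) by blast
    qed
    then show ?thesis unfolding op m.openin_mtopology by blast
  qed
  then have "X = m.mtopology" by (simp add: topology_eq)
  then show ?thesis unfolding metrizable_space_def using MS by blast
qed

end
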